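(* Let $K$ be a field of characteristic $0$, $U=K[x^{\pm1}]$ the Laurent polynomial algebra, $\beta\in K$, and let $Os(0,\beta)$ denote $U$ with the product $a\star b=\partial(ab)+2\beta x^{-2}ab$ ($\partial=d/dx$). Let $\overline{Os}(0,\beta)$ be the subspace spanned by the elements $\overline{x^i}$, $i\in\mathbb Z$, $i\neq-1$, where $\overline{x^i}=x^i$ for $i<-1$ and $\overline{x^i}=x^i+2(i+1)^{-1}\beta x^{i-1}$ for $i>-1$. Then $\overline{Os}(0,\beta)$ is closed under $\star$; moreover it is an ideal of $(Os(0,\beta),\star)$ of codimension $1$. *)

theory Defs
  imports Complex_Main "HOL-Library.Poly_Mapping"
begin

text \<open>Laurent polynomials K[x, x^-1] are modelled as finitely supported coefficient
  functions int =>0 K; the ring structure of poly_mapping is the usual convolution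
  product, so this type is exactly the Laurent polynomial algebra.\<close>

type_synonym 'a laurent = "int \<Rightarrow>\<^sub>0 'a"

definition lmono :: "int \<Rightarrow> 'a::field laurent"
  where "lmono i = Poly_Mapping.single i 1"

definition lscale :: "'a::field \<Rightarrow> 'a laurent \<Rightarrow> 'a laurent"
  where "lscale c p = Poly_Mapping.map (\<lambda>v. c * v) p"

lift_definition lderiv :: "'a::field laurent \<Rightarrow> 'a laurent"
  is "\<lambda>p n. of_int (n + 1) * p (n + 1)"
proof -
  fix p :: "int \<Rightarrow> 'a" assume "finite {n. p n \<noteq> 0}"
  then have "finite ((\<lambda>n. n - 1) ` {n. p n \<noteq> 0})" by simp
  moreover have "{n. of_int (n + 1) * p (n + 1) \<noteq> 0} \<subseteq> (\<lambda>n. n - 1) ` {n. p n \<noteq> 0}"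
    by (auto simp: image_iff intro!: exI[of _ "_ + 1"])
  ultimately show "finite {n. of_int (n + 1) * p (n + 1) \<noteq> (0::'a)}"
    by (rule finite_subset[rotated])
qed

definition os_star :: "'a::field \<Rightarrow> 'a laurent \<Rightarrow> 'a laurent \<Rightarrow> 'a laurent"
  where "os_star \<beta> a b = lderiv (a * b) + lscale (2 * \<beta>) (lmono (-2) * (a * b))"

definition os_bar :: "'a::field \<Rightarrow> int \<Rightarrow> 'a laurent"
  where "os_bar \<beta> i =
     (if i < -1 then lmono i
      else lmono i + lscale (2 * inverse (of_int (i + 1)) * \<beta>) (lmono (i - 1)))"

definition lspan :: "'a::field laurent set \<Rightarrow> 'a laurent set"
  where "lspan S = {(\<Sum>v\<in>T. lscale (c v) v) | T c. finite T \<and> T \<subseteq> S}"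

definition os_bar_space :: "'a::field \<Rightarrow> 'a laurent set"
  where "os_bar_space \<beta> = lspan {os_bar \<beta> i | i. i \<noteq> -1}"

definition is_alg_ideal :: "('a::field laurent \<Rightarrow> 'a laurent \<Rightarrow> 'a laurent) \<Rightarrow> 'a laurent set \<Rightarrow> bool"
  where "is_alg_ideal mult I \<longleftrightarrow>
     0 \<in> I \<and> (\<forall>u\<in>I. \<forall>v\<in>I. u + v \<in> I) \<and> (\<forall>c. \<forall>u\<in>I. lscale c u \<in> I) \<and>
     (\<forall>a. \<forall>u\<in>I. mult a u \<in> I \<and> mult u a \<in> I)"

definition codim_one :: "'a::field laurent set \<Rightarrow> bool"
  where "codim_one I \<longleftrightarrow> (\<exists>v. v \<notin> I \<and> (\<forall>u. \<exists>c. u - lscale c v \<in> I))"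

end

theory Submission
  imports Defs
begin

lemma lookup_lscale[simp]: "Poly_Mapping.lookup (lscale c p) n = c * Poly_Mapping.lookup p n"
  unfolding lscale_def by (simp add: map.rep_eq when_def)

lemma lookup_lderiv[simp]: "Poly_Mapping.lookup (lderiv p) n = of_int (n+1) * Poly_Mapping.lookup p (n+1)"
  by (simp add: lderiv.rep_eq)

interpretation L: module "lscale :: 'a::field \<Rightarrow> 'a laurent \<Rightarrow> 'a laurent"
  by unfold_locales (auto intro!: poly_mapping_eqI simp: lookup_add algebra_simps)

lemma lspan_eq: "lspan = L.span"
  by (auto simp: fun_eq_iff lspan_def L.span_explicit)

lemma update_eq: "a \<notin> Poly_Mapping.keys f \<Longrightarrow> Poly_Mapping.update a b f = f + Poly_Mapping.single a b"
  by (rule poly_mapping_eqI) (auto simp: lookup_update lookup_add lookup_single when_def in_keys_iff)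

lemma lderiv_add: "lderiv (p + q) = lderiv p + lderiv q"
  by (rule poly_mapping_eqI) (simp add: lookup_add algebra_simps)

lemma lderiv_single: "lderiv (Poly_Mapping.single k c) = Poly_Mapping.single (k - 1) (of_int k * c)"
  by (rule poly_mapping_eqI) (auto simp: lookup_single when_def)

lemma lderiv_zero: "lderiv 0 = 0"
  by (rule poly_mapping_eqI) simp

definition cf :: "'a::field_char_0 \<Rightarrow> int \<Rightarrow> 'a" where
  "cf \<beta> n = (if n < -1 then 0 else (-2*\<beta>)^nat(n+1) / fact (nat(n+1)))"

definition phi :: "'a::field_char_0 \<Rightarrow> 'a laurent \<Rightarrow> 'a" where
  "phi \<beta> p = (\<Sum>n\<in>Poly_Mapping.keys p. Poly_Mapping.lookup p n * cf \<beta> n)"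

lemma phi_sup: "finite A \<Longrightarrow> Poly_Mapping.keys p \<subseteq> A \<Longrightarrow> phi \<beta> p = (\<Sum>n\<in>A. Poly_Mapping.lookup p n * cf \<beta> n)"
  unfolding phi_def by (rule sum.mono_neutral_left) (auto simp: in_keys_iff)

lemma phi_add: "phi \<beta> (p + q) = phi \<beta> p + phi \<beta> q"
proof -
  let ?A = "Poly_Mapping.keys p \<union> Poly_Mapping.keys q"
  have "Poly_Mapping.keys (p+q) \<subseteq> ?A" by (rule keys_add)
  then show ?thesis
    by (simp add: phi_sup[of ?A] lookup_add algebra_simps sum.distrib)
qed

lemma phi_zero: "phi \<beta> 0 = 0" by (simp add: phi_def)

lemma phi_lscale: "phi \<beta> (lscale c p) = c * phi \<beta> p"
proof -
  have "Poly_Mapping.keys (lscale c p) \<subseteq> Poly_Mapping.keys p" by (auto simp: in_keys_iff)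
  then show ?thesis by (simp add: phi_sup[of "Poly_Mapping.keys p"] sum_distrib_left algebra_simps)
qed

lemma phi_single: "phi \<beta> (Poly_Mapping.single k c) = c * cf \<beta> k"
  by (simp add: phi_sup[of "{k}"])

lemma phi_diff: "phi \<beta> (p - q) = phi \<beta> p - phi \<beta> q"
  by (metis add_diff_cancel_right' diff_add_cancel phi_add)

lemma phi_sum: "phi \<beta> (sum f T) = (\<Sum>x\<in>T. phi \<beta> (f x))"
  by (induction T rule: infinite_finite_induct) (auto simp: phi_zero phi_add)

lemma cf_rec: "k \<ge> 0 \<Longrightarrow> cf \<beta> k + 2 * inverse (of_int (k + 1)) * \<beta> * cf \<beta> (k - 1) = (0::'a::field_char_0)"
proof -
  assume k: "k \<ge> 0"
  obtain m where m: "k = int m" using k nonneg_eq_int by blast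
  have "nat (k+1) = Suc m" "nat k = m" using m by auto
  moreover have "of_int (k+1) = (of_nat (Suc m) :: 'a)" using m by simp
  ultimately show ?thesis
    by (simp add: cf_def k m field_simps) 
qed

lemma cf_star: "of_int k * cf \<beta> (k - 1) + 2 * \<beta> * cf \<beta> (k - 2) = (0::'a::field_char_0)"
proof (cases "k \<ge> 1")
  case True
  obtain m where m: "k = int (Suc m)" using True
    by (intro that[of "nat (k-1)"]) auto
  have "nat (k-1+1) = Suc m" "nat (k-2+1) = m" using m by auto
  have e1: "of_int k = (of_nat (Suc m) :: 'a)" using m by simp
  have e2: "(fact (Suc m) :: 'a) = of_nat (Suc m) * fact m" by simp
  have nz: "(of_nat (Suc m) :: 'a) \<noteq> 0" by (rule of_nat_neq_0)
  have A: "of_int k * cf \<beta> (k - 1) = (-2*\<beta>) * (-2*\<beta>)^m / fact m"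
    using nz by (simp add: cf_def m e2 del: of_nat_Suc fact_Suc)
  have B: "cf \<beta> (k - 2) = (-2*\<beta>)^m / fact m"
    by (simp add: cf_def m)
  have "of_int k * cf \<beta> (k - 1) + 2 * \<beta> * cf \<beta> (k - 2) = ((-2*\<beta>) * (-2*\<beta>)^m + 2 * \<beta> * (-2*\<beta>)^m) / fact m"
    unfolding A B by (simp add: add_divide_distrib)
  also have "\<dots> = 0" by simp
  finally show ?thesis .
next
  case False
  then show ?thesis by (auto simp: cf_def)
qed

lemma lmono_mult_single: "lmono j * Poly_Mapping.single a b = Poly_Mapping.single (j + a) b"
  by (simp add: lmono_def mult_single)

lemma phi_star_aux: "phi \<beta> (lderiv w) + 2 * \<beta> * phi \<beta> (lmono (-2) * w) = (0::'a::field_char_0)"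
proof (induction w rule: update_induct)
  case const
  then show ?case by (simp add: lderiv_zero phi_zero)
next
  case (update f a b)
  have "phi \<beta> (lderiv (Poly_Mapping.single a b)) + 2 * \<beta> * phi \<beta> (lmono (-2) * Poly_Mapping.single a b)
     = b * (of_int a * cf \<beta> (a - 1) + 2 * \<beta> * cf \<beta> (a - 2))"
    by (simp add: lderiv_single lmono_mult_single phi_single) (simp add: algebra_simps)
  also have "\<dots> = 0" by (simp add: cf_star)
  finally have z: "phi \<beta> (lderiv (Poly_Mapping.single a b)) + 2 * \<beta> * phi \<beta> (lmono (-2) * Poly_Mapping.single a b) = 0" .
  let ?s = "Poly_Mapping.single a b"
  have "phi \<beta> (lderiv (f + ?s)) + 2 * \<beta> * phi \<beta> (lmono (-2) * (f + ?s))
    = (phi \<beta> (lderiv f) + 2 * \<beta> * phi \<beta> (lmono (-2) * f)) + (phi \<beta> (lderiv ?s) + 2 * \<beta> * phi \<beta> (lmono (-2) * ?s))"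
    by (simp only: lderiv_add distrib_left phi_add) (simp add: algebra_simps)
  then show ?case using update z by (simp add: update_eq)
qed

lemma phi_star: "phi \<beta> (os_star \<beta> a b) = (0::'a::field_char_0)"
  using phi_star_aux[of \<beta> "a*b"] by (simp add: os_star_def phi_add phi_lscale mult.assoc)

lemma phi_bar: "i \<noteq> -1 \<Longrightarrow> phi \<beta> (os_bar \<beta> i) = (0::'a::field_char_0)"
  using cf_rec[of i \<beta>]
  by (auto simp: os_bar_def lmono_def phi_add phi_lscale phi_single cf_def[of _ i] algebra_simps)

lemma phi_span: "u \<in> os_bar_space \<beta> \<Longrightarrow> phi \<beta> u = (0::'a::field_char_0)"
  unfolding os_bar_space_def lspan_def
proof (elim CollectE exE conjE)
  fix T c assume u: "u = (\<Sum>v\<in>T. lscale (c v) v)" and T: "T \<subseteq> {os_bar \<beta> i |i. i \<noteq> - 1}"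
  have "\<forall>x\<in>T. c x * phi \<beta> x = 0"
  proof
    fix x assume "x \<in> T"
    then obtain i where "x = os_bar \<beta> i" "i \<noteq> -1" using T by blast
    then show "c x * phi \<beta> x = 0" by (simp add: phi_bar)
  qed
  then have "(\<Sum>x\<in>T. c x * phi \<beta> x) = 0" by (rule sum.neutral)
  then show "phi \<beta> u = 0" by (simp add: u phi_sum phi_lscale)
qed

lemma mono_in: "lmono k - lscale (cf \<beta> k) (lmono (-1)) \<in> os_bar_space (\<beta>::'a::field_char_0)"
proof -
  let ?B = "{os_bar \<beta> i | i. i \<noteq> -1}"
  have S: "os_bar_space \<beta> = L.span ?B" by (simp add: os_bar_space_def lspan_eq)
  have A: "lmono (int m - 1) - lscale (cf \<beta> (int m - 1)) (lmono (-1)) \<in> L.span ?B" for m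
  proof (induction m)
    case 0
    then show ?case by (simp add: cf_def L.span_zero)
  next
    case (Suc m)
    define k where "k = int m"
    have k0: "k \<ge> 0" by (simp add: k_def)
    define d where "d = 2 * inverse (of_int (k + 1)) * \<beta>"
    have ob: "os_bar \<beta> k = lmono k + lscale d (lmono (k - 1))"
      using k0 by (simp add: os_bar_def d_def)
    have obin: "os_bar \<beta> k \<in> L.span ?B" using k0 by (intro L.span_base) auto
    have IH: "lmono (k - 1) - lscale (cf \<beta> (k - 1)) (lmono (-1)) \<in> L.span ?B"
      using Suc by (simp add: k_def)
    have h: "cf \<beta> k + d * cf \<beta> (k - 1) = 0" using cf_rec[OF k0, of \<beta>] by (simp add: d_def)
    have rec: "cf \<beta> k = - d * cf \<beta> (k - 1)" using h by (simp add: eq_neg_iff_add_eq_0)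
    have "lmono k - lscale (cf \<beta> k) (lmono (-1)) = os_bar \<beta> k - lscale d (lmono (k - 1) - lscale (cf \<beta> (k - 1)) (lmono (-1)))"
      unfolding ob rec by (rule poly_mapping_eqI) (simp add: lookup_add lookup_minus algebra_simps)
    also have "\<dots> \<in> L.span ?B" by (rule L.span_diff[OF obin L.span_scale[OF IH]])
    finally show ?case by (simp add: k_def)
  qed
  show ?thesis
  proof (cases "k < -1")
    case True
    then have "lmono k \<in> L.span ?B" by (intro L.span_base) (auto simp: os_bar_def intro!: exI[of _ k])
    then show ?thesis using True by (simp add: S cf_def)
  next
    case False
    then have "k = int (nat (k + 1)) - 1" by simp
    then show ?thesis using A[of "nat (k+1)"] S by metis
  qed
qed

lemma ker_in: "u - lscale (phi \<beta> u) (lmono (-1)) \<in> os_bar_space (\<beta>::'a::field_char_0)"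
proof (induction u rule: update_induct)
  case const
  then show ?case by (simp add: phi_zero os_bar_space_def lspan_eq L.span_zero)
next
  case (update f a b)
  have "f + Poly_Mapping.single a b - lscale (phi \<beta> (f + Poly_Mapping.single a b)) (lmono (-1))
    = (f - lscale (phi \<beta> f) (lmono (-1))) + lscale b (lmono a - lscale (cf \<beta> a) (lmono (-1)))"
    by (rule poly_mapping_eqI) (simp add: phi_add phi_single lmono_def lookup_add lookup_minus lookup_single when_def algebra_simps)
  also have "\<dots> \<in> os_bar_space \<beta>" using update(3) mono_in[of a \<beta>]
    by (simp add: os_bar_space_def lspan_eq L.span_add L.span_scale)
  finally show ?case using update by (simp add: update_eq)
qed

theorem mainTheorem15:
  fixes \<beta> :: "'a::field_char_0"
  shows "(\<forall>a\<in>os_bar_space \<beta>. \<forall>b\<in>os_bar_space \<beta>. os_star \<beta> a b \<in> os_bar_space \<beta>)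
         \<and> is_alg_ideal (os_star \<beta>) (os_bar_space \<beta>)
         \<and> codim_one (os_bar_space \<beta>)"
proof -
  have star: "os_star \<beta> a b \<in> os_bar_space \<beta>" for a b
    using ker_in[of "os_star \<beta> a b" \<beta>] by (simp add: phi_star)
  have S: "os_bar_space \<beta> = L.span {os_bar \<beta> i | i. i \<noteq> -1}" by (simp add: os_bar_space_def lspan_eq)
  have ideal: "is_alg_ideal (os_star \<beta>) (os_bar_space \<beta>)"
    unfolding is_alg_ideal_def using star by (simp add: S L.span_zero L.span_add L.span_scale)
  have v: "lmono (-1) \<notin> os_bar_space \<beta>"
  proof
    assume "lmono (-1) \<in> os_bar_space \<beta>"
    then have "phi \<beta> (lmono (-1)) = 0" by (rule phi_span)
    then show False by (simp add: lmono_def phi_single cf_def)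
  qed
  have "codim_one (os_bar_space \<beta>)"
    unfolding codim_one_def using v ker_in by blast
  then show ?thesis using star ideal by blast
qed

end
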